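(* Let $G=(V,E)$ be a finite simple graph with diversity $D=D(G)$ and maximum clique size $S$, let $t>1$ be an integer, let $k=\lceil S/t\rceil$, and let $G'$ be a connector of $G$ with parameter $t$. Let $\varphi$ be any proper vertex coloring of $G'$, and for each color $i$ let $G_i$ be the subgraph of $G$ induced by the vertices with $\varphi$-color $i$. Then for every $i$, the maximum degree of $G_i$ is at most $(k-1)\cdot D$.
   Context: The diversity of a vertex $v$ of a graph $G$ is the number of maximal cliques of $G$ containing $v$ (a clique is maximal if no clique of $G$ strictly contains it); the diversity $D(G)$ is the maximum diversity over all vertices. Let $\mathcal Q$ be the set of all maximal cliques of $G$ and let $S(Q)$ denote the number of vertices of $Q$. A connector of $G$ with parameter $t$ is obtained as follows: each clique $Q\in\mathcal Q$ (independently of the other cliques) partitions its vertex set into $k(Q)=\lceil S(Q)/t\rceil$ parts $V_1(Q),\dots,V_{k(Q)}(Q)$, each of size at most $t$. The connector is $G'=(V,E')$ with $E'=\{(u,v)\in E : u,v\in V_i(Q)\text{ for some }Q\in\mathcal Q\text{ and some }i\}$. *)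

theory Defs
  imports Complex_Main
begin

definition simple_graph :: "'a set \<Rightarrow> ('a \<Rightarrow> 'a \<Rightarrow> bool) \<Rightarrow> bool" where
  "simple_graph V E \<longleftrightarrow> finite V \<and> (\<forall>u v. E u v \<longrightarrow> u \<in> V \<and> v \<in> V)
     \<and> (\<forall>u v. E u v \<longrightarrow> E v u) \<and> (\<forall>u. \<not> E u u)"

definition clique :: "'a set \<Rightarrow> ('a \<Rightarrow> 'a \<Rightarrow> bool) \<Rightarrow> 'a set \<Rightarrow> bool" where
  "clique V E Q \<longleftrightarrow> Q \<subseteq> V \<and> (\<forall>u\<in>Q. \<forall>v\<in>Q. u \<noteq> v \<longrightarrow> E u v)"

definition maximal_clique :: "'a set \<Rightarrow> ('a \<Rightarrow> 'a \<Rightarrow> bool) \<Rightarrow> 'a set \<Rightarrow> bool" where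
  "maximal_clique V E Q \<longleftrightarrow> clique V E Q \<and> (\<forall>Q'. clique V E Q' \<and> Q \<subseteq> Q' \<longrightarrow> Q' = Q)"

definition maximal_cliques :: "'a set \<Rightarrow> ('a \<Rightarrow> 'a \<Rightarrow> bool) \<Rightarrow> 'a set set" where
  "maximal_cliques V E = {Q. maximal_clique V E Q}"

definition vertex_diversity :: "'a set \<Rightarrow> ('a \<Rightarrow> 'a \<Rightarrow> bool) \<Rightarrow> 'a \<Rightarrow> nat" where
  "vertex_diversity V E v = card {Q \<in> maximal_cliques V E. v \<in> Q}"

definition diversity :: "'a set \<Rightarrow> ('a \<Rightarrow> 'a \<Rightarrow> bool) \<Rightarrow> nat" where
  "diversity V E = Max (insert 0 (vertex_diversity V E ` V))"

definition max_clique_size :: "'a set \<Rightarrow> ('a \<Rightarrow> 'a \<Rightarrow> bool) \<Rightarrow> nat" where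
  "max_clique_size V E = Max (insert 0 (card ` {Q. clique V E Q}))"

definition num_parts :: "nat \<Rightarrow> nat \<Rightarrow> nat" where
  "num_parts t s = nat \<lceil>real s / real t\<rceil>"

definition connector_partition ::
  "'a set \<Rightarrow> ('a \<Rightarrow> 'a \<Rightarrow> bool) \<Rightarrow> nat \<Rightarrow> ('a set \<Rightarrow> nat \<Rightarrow> 'a set) \<Rightarrow> bool" where
  "connector_partition V E t part \<longleftrightarrow>
     (\<forall>Q \<in> maximal_cliques V E.
        (\<Union>i<num_parts t (card Q). part Q i) = Q
      \<and> (\<forall>i<num_parts t (card Q). \<forall>j<num_parts t (card Q). i \<noteq> j \<longrightarrow> part Q i \<inter> part Q j = {})
      \<and> (\<forall>i<num_parts t (card Q). card (part Q i) \<le> t))"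

definition connector_edges ::
  "'a set \<Rightarrow> ('a \<Rightarrow> 'a \<Rightarrow> bool) \<Rightarrow> nat \<Rightarrow> ('a set \<Rightarrow> nat \<Rightarrow> 'a set) \<Rightarrow> 'a \<Rightarrow> 'a \<Rightarrow> bool" where
  "connector_edges V E t part u v \<longleftrightarrow> E u v \<and>
     (\<exists>Q \<in> maximal_cliques V E. \<exists>i<num_parts t (card Q). u \<in> part Q i \<and> v \<in> part Q i)"

definition proper_coloring :: "'a set \<Rightarrow> ('a \<Rightarrow> 'a \<Rightarrow> bool) \<Rightarrow> ('a \<Rightarrow> 'c) \<Rightarrow> bool" where
  "proper_coloring V E \<phi> \<longleftrightarrow> (\<forall>u\<in>V. \<forall>v\<in>V. E u v \<longrightarrow> \<phi> u \<noteq> \<phi> v)"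

definition induced_vertices :: "'a set \<Rightarrow> ('a \<Rightarrow> 'c) \<Rightarrow> 'c \<Rightarrow> 'a set" where
  "induced_vertices V \<phi> c = {v \<in> V. \<phi> v = c}"

definition induced_edges :: "('a \<Rightarrow> 'a \<Rightarrow> bool) \<Rightarrow> 'a set \<Rightarrow> 'a \<Rightarrow> 'a \<Rightarrow> bool" where
  "induced_edges E W u v \<longleftrightarrow> u \<in> W \<and> v \<in> W \<and> E u v"

definition degree :: "'a set \<Rightarrow> ('a \<Rightarrow> 'a \<Rightarrow> bool) \<Rightarrow> 'a \<Rightarrow> nat" where
  "degree V E v = card {u \<in> V. E v u}"

definition max_degree :: "'a set \<Rightarrow> ('a \<Rightarrow> 'a \<Rightarrow> bool) \<Rightarrow> nat" where
  "max_degree V E = Max (insert 0 (degree V E ` V))"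

end

theory Submission
  imports Defs
begin

lemma num_parts_mono: "a \<le> b \<Longrightarrow> num_parts t a \<le> num_parts t b"
  unfolding num_parts_def
  by (intro nat_mono ceiling_mono divide_right_mono) auto

lemma cliques_finite:
  assumes "finite V" shows "finite {Q. clique V E Q}"
  by (rule finite_subset[of _ "Pow V"]) (auto simp: clique_def assms)

lemma card_le_max_clique:
  assumes "finite V" "clique V E Q" shows "card Q \<le> max_clique_size V E"
  unfolding max_clique_size_def
  using cliques_finite[OF assms(1), of E] assms(2) by (intro Max_ge) auto

lemma edge_in_max_clique:
  assumes sg: "simple_graph V E" and e: "E v u"
  shows "\<exists>Q\<in>maximal_cliques V E. v \<in> Q \<and> u \<in> Q"
proof -
  have fV: "finite V" using sg by (simp add: simple_graph_def)
  let ?C = "{Q. clique V E Q \<and> {v,u} \<subseteq> Q}"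
  have fin: "finite ?C" by (rule finite_subset[OF _ cliques_finite[OF fV, of E]]) auto
  have ne: "{v,u} \<in> ?C" using sg e unfolding simple_graph_def clique_def by auto
  obtain Q where Q: "Q \<in> ?C" "\<forall>Q'\<in>?C. card Q' \<le> card Q"
  proof -
    have "Max (card ` ?C) \<in> card ` ?C" using fin ne by (intro Max_in) auto
    then obtain Q where "Q \<in> ?C" "card Q = Max (card ` ?C)" by auto
    moreover have "\<forall>Q'\<in>?C. card Q' \<le> Max (card ` ?C)" using fin by auto
    ultimately show ?thesis using that by auto
  qed
  have "maximal_clique V E Q"
    unfolding maximal_clique_def
  proof (intro conjI allI impI)
    show "clique V E Q" using Q by auto
    fix Q' assume a: "clique V E Q' \<and> Q \<subseteq> Q'"
    then have "Q' \<in> ?C" using Q by auto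
    then have "card Q' \<le> card Q" using Q by auto
    moreover have "finite Q'" using a fV finite_subset unfolding clique_def by blast
    ultimately show "Q' = Q" using a card_seteq by blast
  qed
  then show ?thesis using Q by (auto simp: maximal_cliques_def)
qed

lemma per_clique:
  assumes sg: "simple_graph V E"
    and cp: "connector_partition V E t part"
    and pc: "proper_coloring V (connector_edges V E t part) \<phi>"
    and Qm: "Q \<in> maximal_cliques V E" and vQ: "v \<in> Q" and vc: "\<phi> v = c"
  shows "card {u \<in> Q. \<phi> u = c \<and> u \<noteq> v} \<le> num_parts t (card Q) - 1"
proof -
  let ?n = "num_parts t (card Q)"
  have cl: "clique V E Q" using Qm by (auto simp: maximal_cliques_def maximal_clique_def)
  have QV: "Q \<subseteq> V" using cl by (simp add: clique_def)
  have un: "(\<Union>i<?n. part Q i) = Q" using cp Qm by (simp add: connector_partition_def)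
  obtain i0 where i0: "i0 < ?n" "v \<in> part Q i0" using un vQ by auto
  define f where "f u = (SOME j. j < ?n \<and> u \<in> part Q j)" for u
  have fp: "f u < ?n \<and> u \<in> part Q (f u)" if "u \<in> Q" for u
  proof -
    have "\<exists>j. j < ?n \<and> u \<in> part Q j" using un that by auto
    then show ?thesis unfolding f_def by (rule someI_ex)
  qed
  have sub: "\<And>j. j < ?n \<Longrightarrow> part Q j \<subseteq> Q" using un by auto
  have conn: "\<phi> a \<noteq> \<phi> b" if "a \<in> part Q j" "b \<in> part Q j" "j < ?n" "a \<noteq> b" for a b j
  proof -
    have "a \<in> Q" "b \<in> Q" using that sub by auto
    then have "E a b" using cl that(4) by (auto simp: clique_def)
    then have "connector_edges V E t part a b"
      unfolding connector_edges_def using Qm that by blast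
    then show ?thesis using pc \<open>a \<in> Q\<close> \<open>b \<in> Q\<close> QV unfolding proper_coloring_def by blast
  qed
  let ?S = "{u \<in> Q. \<phi> u = c \<and> u \<noteq> v}"
  have "inj_on f ?S"
  proof (rule inj_onI)
    fix a b assume a: "a \<in> ?S" and b: "b \<in> ?S" and eq: "f a = f b"
    show "a = b"
    proof (rule ccontr)
      assume "a \<noteq> b"
      then have "\<phi> a \<noteq> \<phi> b" using conn[of a "f a" b] fp[of a] fp[of b] a b eq by auto
      then show False using a b by auto
    qed
  qed
  moreover have "f ` ?S \<subseteq> {..<?n} - {i0}"
  proof
    fix j assume "j \<in> f ` ?S"
    then obtain u where u: "u \<in> ?S" "j = f u" by auto
    have "f u \<noteq> i0"
    proof
      assume "f u = i0"
      then have "\<phi> u \<noteq> \<phi> v" using conn[of u i0 v] fp[of u] i0 u by auto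
      then show False using u vc by auto
    qed
    then show "j \<in> {..<?n} - {i0}" using u fp by auto
  qed
  ultimately have "card ?S \<le> card ({..<?n} - {i0})"
    by (intro card_inj_on_le) auto
  also have "\<dots> = ?n - 1" using i0 by simp
  finally show ?thesis .
qed

theorem mainTheorem2:
  fixes V :: "'a set" and E :: "'a \<Rightarrow> 'a \<Rightarrow> bool" and t :: nat
    and part :: "'a set \<Rightarrow> nat \<Rightarrow> 'a set" and \<phi> :: "'a \<Rightarrow> 'c"
  assumes "simple_graph V E"
    and "t > 1"
    and "connector_partition V E t part"
    and "proper_coloring V (connector_edges V E t part) \<phi>"
  shows "\<forall>c. max_degree (induced_vertices V \<phi> c) (induced_edges E (induced_vertices V \<phi> c))
           \<le> (num_parts t (max_clique_size V E) - 1) * diversity V E"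
proof
  fix c
  let ?W = "induced_vertices V \<phi> c"
  let ?K = "num_parts t (max_clique_size V E)"
  have fV: "finite V" using assms(1) by (simp add: simple_graph_def)
  have fW: "finite ?W" using fV by (simp add: induced_vertices_def)
  have deg: "degree ?W (induced_edges E ?W) v \<le> (?K - 1) * diversity V E" if vW: "v \<in> ?W" for v
  proof -
    have vV: "v \<in> V" and vc: "\<phi> v = c" using vW by (auto simp: induced_vertices_def)
    let ?M = "{Q \<in> maximal_cliques V E. v \<in> Q}"
    have fM: "finite ?M"
      by (rule finite_subset[OF _ cliques_finite[OF fV, of E]])
         (auto simp: maximal_cliques_def maximal_clique_def)
    let ?N = "{u \<in> ?W. induced_edges E ?W v u}"
    have "?N \<subseteq> (\<Union>Q\<in>?M. {u \<in> Q. \<phi> u = c \<and> u \<noteq> v})"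
    proof
      fix u assume u: "u \<in> ?N"
      then have "E v u" "\<phi> u = c" by (auto simp: induced_edges_def induced_vertices_def)
      moreover have "u \<noteq> v" using \<open>E v u\<close> assms(1) by (auto simp: simple_graph_def)
      moreover obtain Q where "Q \<in> maximal_cliques V E" "v \<in> Q" "u \<in> Q"
        using edge_in_max_clique[OF assms(1) \<open>E v u\<close>] by blast
      ultimately show "u \<in> (\<Union>Q\<in>?M. {u \<in> Q. \<phi> u = c \<and> u \<noteq> v})" by auto
    qed
    moreover have "finite (\<Union>Q\<in>?M. {u \<in> Q. \<phi> u = c \<and> u \<noteq> v})"
      by (rule finite_subset[OF _ fV]) (auto simp: maximal_cliques_def maximal_clique_def clique_def)
    ultimately have "card ?N \<le> card (\<Union>Q\<in>?M. {u \<in> Q. \<phi> u = c \<and> u \<noteq> v})"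
      by (intro card_mono)
    also have "\<dots> \<le> (\<Sum>Q\<in>?M. card {u \<in> Q. \<phi> u = c \<and> u \<noteq> v})"
      by (rule card_UN_le[OF fM])
    also have "\<dots> \<le> (\<Sum>Q\<in>?M. ?K - 1)"
    proof (rule sum_mono)
      fix Q assume Q: "Q \<in> ?M"
      have "card {u \<in> Q. \<phi> u = c \<and> u \<noteq> v} \<le> num_parts t (card Q) - 1"
        using per_clique[OF assms(1,3,4), of Q v c] Q vc by auto
      also have "\<dots> \<le> ?K - 1"
        using card_le_max_clique[OF fV, of E Q] Q num_parts_mono
        by (auto simp: maximal_cliques_def maximal_clique_def intro: diff_le_mono)
      finally show "card {u \<in> Q. \<phi> u = c \<and> u \<noteq> v} \<le> ?K - 1" .
    qed
    also have "\<dots> = card ?M * (?K - 1)" by simp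
    also have "\<dots> \<le> diversity V E * (?K - 1)"
    proof (rule mult_right_mono)
      have "card ?M = vertex_diversity V E v" by (simp add: vertex_diversity_def)
      also have "\<dots> \<le> diversity V E" unfolding diversity_def using fV vV by (intro Max_ge) auto
      finally show "card ?M \<le> diversity V E" .
    qed simp
    finally show ?thesis by (simp add: degree_def mult.commute)
  qed
  show "max_degree ?W (induced_edges E ?W) \<le> (?K - 1) * diversity V E"
    unfolding max_degree_def using fW deg by (subst Max_le_iff) auto
qed

end
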